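(* Let $\sigma\in\mathbb{R}^m$ (stresses of the springs, related to elastic elongations by $\sigma=K\varepsilon$ with $K$ positive diagonal) and let $f\in\mathbb{R}^{nd}$ be a stress load. If the lattice with external displacement constraint matrix $R$ is at equilibrium, i.e. \[ \big(-(D_{\xi_0}\varphi)^T\sigma+f\big)^T\delta\zeta=0\quad\text{for all }\delta\zeta\in\mathrm{Ker}\,R, \] then $(D_{\xi_0}\varphi)^T(-\sigma+Hf)\in\mathrm{Im}\,R^T$. Conversely, if $\mathrm{rank}\begin{pmatrix}(D_{\xi_0}\varphi)^T & R^T\end{pmatrix}=nd$, then for any $f\in\mathbb{R}^{nd}$, $(D_{\xi_0}\varphi)^T(-\sigma+Hf)\in\mathrm{Im}\,R^T$ implies that the lattice is at equilibrium.
   Context: $n,m,d,q$ are positive integers. $Q$ is an $n\times m$ matrix with entries in $\{0,1,-1\}$, each column having exactly one $1$ (origin of spring $i$) and one $-1$ (terminus), other entries $0$. $\xi_0\in\mathbb{R}^{nd}$ lists node coordinates ($\xi^0_{d(j-1)+k}$ is the $k$-th coordinate of node $j$), with the endpoints of each spring distinct. $\varphi:\mathbb{R}^{nd}\to\mathbb{R}^m$, $\varphi_i(\xi)=\sqrt{\sum_{k=1}^d(\sum_{j}Q_{ji}\xi_{d(j-1)+k})^2}$, and $D_{\xi_0}\varphi$ is its $m\times nd$ Jacobian at $\xi_0$: $(D_{\xi_0}\varphi)_{i,d(j-1)+k}=\mathcal{D}_{ik}Q_{ji}$ with $\mathcal{D}_{ik}=\frac{1}{\varphi_i(\xi_0)}\sum_{\bar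 j}Q_{\bar ji}\xi^0_{d(\bar j-1)+k}$. The forces exerted by the springs on the nodes are $-(D_{\xi_0}\varphi)^T\sigma\in\mathbb{R}^{nd}$. $R$ is a $q\times nd$ matrix defining the affine kinematic constraint $R(\zeta+\xi_0)+r(t)=0$ on node displacements $\zeta$. The equilibrium condition above is the principle of virtual work for this constraint. $H$ is the $m\times nd$ matrix formed by the first $m$ rows of the Moore–Penrose pseudoinverse $\begin{pmatrix}(D_{\xi_0}\varphi)^T & R^T\end{pmatrix}^+$ (an $(m+q)\times nd$ matrix). *)

theory Defs
  imports "HOL-Analysis.Analysis"
begin

text \<open>Node coordinates are indexed by pairs (node j, coordinate k); this is the
  index d(j-1)+k of the paper. Springs are indexed by type 's, constraints by 'q.\<close>

definition incidence_matrix :: "real^'s^'node \<Rightarrow> bool" where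
  "incidence_matrix Q \<longleftrightarrow>
     (\<forall>j i. Q $ j $ i \<in> {0, 1, -1}) \<and>
     (\<forall>i. (\<exists>!j. Q $ j $ i = 1) \<and> (\<exists>!j. Q $ j $ i = -1))"

definition spring_length :: "real^'s::finite^'node::finite \<Rightarrow> real^('node \<times> 'dim::finite) \<Rightarrow> 's \<Rightarrow> real" where
  "spring_length Q \<xi> i = sqrt (\<Sum>k\<in>UNIV. (\<Sum>j\<in>UNIV. Q $ j $ i * \<xi> $ (j, k))\<^sup>2)"

definition phi_map :: "real^'s::finite^'node::finite \<Rightarrow> real^('node \<times> 'dim::finite) \<Rightarrow> real^'s" where
  "phi_map Q \<xi> = (\<chi> i. spring_length Q \<xi> i)"

definition Dcal :: "real^'s::finite^'node::finite \<Rightarrow> real^('node \<times> 'dim::finite) \<Rightarrow> 's \<Rightarrow> 'dim \<Rightarrow> real" where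
  "Dcal Q \<xi>0 i k = (1 / spring_length Q \<xi>0 i) * (\<Sum>j\<in>UNIV. Q $ j $ i * \<xi>0 $ (j, k))"

text \<open>Jacobian of phi at xi0, an m x nd matrix.\<close>
definition Dphi :: "real^'s::finite^'node::finite \<Rightarrow> real^('node \<times> 'dim::finite) \<Rightarrow> real^('node \<times> 'dim)^'s" where
  "Dphi Q \<xi>0 = (\<chi> i. \<chi> x. Dcal Q \<xi>0 i (snd x) * Q $ fst x $ i)"

text \<open>Moore--Penrose pseudoinverse, via the four Penrose conditions.\<close>
definition pinv :: "real^'n^'m \<Rightarrow> real^'m^'n" where
  "pinv A = (THE X. A ** X ** A = A \<and> X ** A ** X = X \<and>
                    transpose (A ** X) = A ** X \<and> transpose (X ** A) = X ** A)"

text \<open>The block matrix ( (D phi)^T  R^T ), of size nd x (m+q).\<close>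
definition block_DR :: "real^'N^'s \<Rightarrow> real^'N^'q \<Rightarrow> real^('s + 'q)^'N" where
  "block_DR D R = (\<chi> x. \<chi> c. case c of Inl i \<Rightarrow> D $ i $ x | Inr l \<Rightarrow> R $ l $ x)"

text \<open>H: the first m rows of the pseudoinverse of the block matrix.\<close>
definition Hmat :: "real^'N^'s \<Rightarrow> real^'N^'q \<Rightarrow> real^'N^'s" where
  "Hmat D R = (\<chi> i. pinv (block_DR D R) $ Inl i)"

definition equilibrium :: "real^'N^'s \<Rightarrow> real^'N^'q \<Rightarrow> real^'s \<Rightarrow> real^'N \<Rightarrow> bool" where
  "equilibrium D R \<sigma> f \<longleftrightarrow>
     (\<forall>\<delta>\<zeta>. R *v \<delta>\<zeta> = 0 \<longrightarrow> (- (transpose D *v \<sigma>) + f) \<bullet> \<delta>\<zeta> = 0)"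

end

theory Submission
  imports Defs
begin

lemma tr_dot: "(transpose A *v x) \<bullet> y = x \<bullet> (A *v (y::real^_))"
  by (simp add: dot_lmul_matrix)

lemma perp_range:
  fixes A :: "real^'n^'m" and w :: "real^'n"
  assumes "\<forall>d. A *v d = 0 \<longrightarrow> w \<bullet> d = 0"
  shows "w \<in> range (\<lambda>y. transpose A *v y)"
proof -
  define S where "S = range (\<lambda>y. transpose A *v y)"
  have sub: "subspace S" unfolding S_def
    by (rule linear_subspace_image[OF matrix_vector_mul_linear subspace_UNIV])
  have spanS: "span S = S" using span_eq_iff[THEN iffD2, OF sub] .
  obtain y z where y: "y \<in> span S" and z: "\<And>u. u \<in> span S \<Longrightarrow> orthogonal z u" and wyz: "w = y + z"
    using orthogonal_subspace_decomp_exists[of S w] by blast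
  have yS: "y \<in> S" using y spanS by simp
  have "transpose A *v (A *v z) \<in> S" unfolding S_def by (rule rangeI)
  hence "orthogonal z (transpose A *v (A *v z))" using z spanS by simp
  hence "(A *v z) \<bullet> (A *v z) = 0"
    unfolding orthogonal_def using tr_dot[of A "A *v z" z] inner_commute[of z] by simp
  hence Az: "A *v z = 0" by simp
  have "w \<bullet> z = 0" using assms Az by blast
  moreover have "y \<bullet> z = 0" using z[OF y] by (simp add: orthogonal_def inner_commute)
  ultimately have "z \<bullet> z = 0" using wyz by (simp add: inner_add_left)
  hence "z = 0" by simp
  thus ?thesis using wyz yS unfolding S_def by simp
qed

lemma tATA: "transpose (transpose A ** A) = transpose A ** (A::real^'n^'m)"
  by (simp add: matrix_transpose_mul)

lemma range_ATA:
  fixes A :: "real^'n^'m"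
  shows "\<exists>u. (transpose A ** A) *v u = transpose A *v v"
proof -
  have "\<forall>d. (transpose A ** A) *v d = 0 \<longrightarrow> (transpose A *v v) \<bullet> d = 0"
  proof (intro allI impI)
    fix d assume h: "(transpose A ** A) *v d = 0"
    have "transpose A *v (A *v d) = 0" unfolding matrix_vector_mul_assoc by (rule h)
    hence "(A *v d) \<bullet> (A *v d) = 0" using tr_dot[of A "A *v d" d] by simp
    hence "A *v d = 0" by simp
    thus "(transpose A *v v) \<bullet> d = 0" using tr_dot[of A v d] by simp
  qed
  from perp_range[OF this] obtain u where "transpose A *v v = transpose (transpose A ** A) *v u"
    by blast
  thus ?thesis unfolding tATA by metis
qed

lemma cols_solve:
  fixes M :: "real^'n^'m" and N :: "real^'k^'m"
  assumes "\<forall>v. \<exists>u. M *v u = N *v v"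
  shows "\<exists>Y. M ** Y = N"
proof -
  define u where "u j = (SOME u. M *v u = N *v axis j 1)" for j
  have u: "M *v u j = N *v axis j 1" for j
    unfolding u_def using assms by (metis (mono_tags) someI_ex)
  define Y where "Y = transpose (\<chi> j. u j)"
  have "(M ** Y) $ i $ j = N $ i $ j" for i j
  proof -
    have "(M ** Y) $ i $ j = (M *v u j) $ i"
      by (simp add: Y_def matrix_matrix_mult_def matrix_vector_mult_def transpose_def)
    also have "\<dots> = N $ i $ j" by (simp add: u matrix_vector_mult_basis column_def)
    finally show ?thesis .
  qed
  thus ?thesis by (auto simp: vec_eq_iff)
qed

lemma half_pinv:
  fixes A :: "real^'n^'m"
  shows "\<exists>Y. A ** Y ** A = A \<and> transpose (A ** Y) = A ** Y"
proof -
  obtain Y where Y: "(transpose A ** A) ** Y = transpose A"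
    using cols_solve[of "transpose A ** A" "transpose A"] range_ATA by blast
  have t: "transpose Y ** transpose A ** A = A"
    using arg_cong[OF Y, of transpose] by (simp add: matrix_transpose_mul matrix_mul_assoc)
  have AY: "A ** Y = transpose Y ** transpose A ** A ** Y"
    by (simp only: t)
  have sym: "transpose (A ** Y) = A ** Y"
  proof -
    have "transpose (A ** Y) = transpose (transpose Y ** transpose A ** A ** Y)"
      by (simp only: t)
    also have "\<dots> = transpose Y ** transpose A ** A ** Y"
      by (simp add: matrix_transpose_mul matrix_mul_assoc)
    also have "\<dots> = A ** Y" by (simp only: t)
    finally show ?thesis .
  qed
  have "A ** Y ** A = transpose (A ** Y) ** A" using sym by simp
  also have "\<dots> = A" using t by (simp add: matrix_transpose_mul)
  finally show ?thesis using sym by blast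
qed

lemma pinv_exists:
  fixes A :: "real^'n^'m"
  shows "\<exists>X. A ** X ** A = A \<and> X ** A ** X = X \<and>
                    transpose (A ** X) = A ** X \<and> transpose (X ** A) = X ** A"
proof -
  obtain Y where Y1: "A ** Y ** A = A" and Y2: "transpose (A ** Y) = A ** Y"
    using half_pinv by blast
  obtain W where W1: "transpose A ** W ** transpose A = transpose A" and W2: "transpose (transpose A ** W) = transpose A ** W"
    using half_pinv by blast
  define Z where "Z = transpose W"
  have Z1: "A ** Z ** A = A"
    using arg_cong[OF W1, of transpose] by (simp add: Z_def matrix_transpose_mul matrix_mul_assoc)
  have Z2: "transpose (Z ** A) = Z ** A"
    using W2 by (simp add: Z_def matrix_transpose_mul)
  define X where "X = Z ** A ** Y"
  have e1: "A ** X = A ** Y" unfolding X_def by (simp only: matrix_mul_assoc Z1)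
  have Y1r: "A ** (Y ** A) = A" using Y1 by (simp only: matrix_mul_assoc)
  have e2: "X ** A = Z ** A" unfolding X_def by (simp only: matrix_mul_assoc[symmetric] Y1r)
  have f1: "A ** X ** A = A" by (simp only: e1 Y1)
  have f2: "X ** A ** X = X"
  proof -
    have "X ** A ** X = Z ** A ** X" by (simp only: e2)
    also have "\<dots> = Z ** (A ** X)" by (simp only: matrix_mul_assoc)
    also have "\<dots> = Z ** (A ** Y)" by (simp only: e1)
    also have "\<dots> = X" unfolding X_def by (simp only: matrix_mul_assoc)
    finally show ?thesis .
  qed
  show ?thesis
  proof (intro exI[of _ X] conjI)
    show "transpose (A ** X) = A ** X" unfolding e1 by (rule Y2)
    show "transpose (X ** A) = X ** A" unfolding e2 by (rule Z2)
  qed (rule f1, rule f2)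
qed

lemma pinv_unique:
  fixes A :: "real^'n^'m"
  assumes a1: "A ** X ** A = A" and a2: "X ** A ** X = X" and a3: "transpose (A ** X) = A ** X"
    and a4: "transpose (X ** A) = X ** A"
    and b1: "A ** X' ** A = A" and b2: "X' ** A ** X' = X'" and b3: "transpose (A ** X') = A ** X'"
    and b4: "transpose (X' ** A) = X' ** A"
  shows "X = X'"
proof -
  have c1: "A ** X = A ** X'"
  proof -
    have "A ** X = transpose (A ** X) " using a3 by simp
    also have "\<dots> = transpose (A ** X' ** A ** X)" by (simp only: b1)
    also have "\<dots> = transpose (A ** X) ** transpose (A ** X')"
      by (simp add: matrix_transpose_mul matrix_mul_assoc)
    also have "\<dots> = A ** X ** A ** X'" by (simp only: a3 b3 matrix_mul_assoc)
    also have "\<dots> = A ** X'" by (simp only: a1)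
    finally show ?thesis .
  qed
  have c2: "X ** A = X' ** A"
  proof -
    have a1r: "A ** (X ** A) = A" using a1 by (simp only: matrix_mul_assoc)
    have b1r: "A ** (X' ** A) = A" using b1 by (simp only: matrix_mul_assoc)
    have "X ** A = transpose (X ** A)" using a4 by simp
    also have "\<dots> = transpose (X ** A ** X' ** A)" by (simp only: matrix_mul_assoc[symmetric] b1r)
    also have "\<dots> = transpose (X' ** A) ** transpose (X ** A)"
      by (simp add: matrix_transpose_mul matrix_mul_assoc)
    also have "\<dots> = X' ** A ** X ** A" by (simp only: a4 b4 matrix_mul_assoc)
    also have "\<dots> = X' ** A" by (simp only: matrix_mul_assoc[symmetric] a1r)
    finally show ?thesis .
  qed
  have "X = X ** A ** X" using a2 by simp
  also have "\<dots> = X' ** A ** X" by (simp only: c2)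
  also have "\<dots> = X' ** A ** X'" by (simp only: matrix_mul_assoc[symmetric] c1)
  also have "\<dots> = X'" by (rule b2)
  finally show ?thesis .
qed

lemma pinv_prop:
  fixes A :: "real^'n^'m"
  shows "A ** pinv A ** A = A"
proof -
  obtain X where X: "A ** X ** A = A \<and> X ** A ** X = X \<and>
                    transpose (A ** X) = A ** X \<and> transpose (X ** A) = X ** A"
    using pinv_exists by blast
  have "\<exists>!X. A ** X ** A = A \<and> X ** A ** X = X \<and>
                    transpose (A ** X) = A ** X \<and> transpose (X ** A) = X ** A"
    using X pinv_unique by blast
  from theI'[OF this] show ?thesis unfolding pinv_def by blast
qed

lemma sum_UNIV_plus:
  "sum g (UNIV::('a::finite+'b::finite) set) = sum (\<lambda>i. g (Inl i)) UNIV + sum (\<lambda>l. g (Inr l)) UNIV"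
proof -
  have "sum g (UNIV <+> UNIV) = sum (g \<circ> Inl) UNIV + sum (g \<circ> Inr) UNIV"
    by (rule sum.Plus) simp_all
  thus ?thesis by (simp add: UNIV_Plus_UNIV comp_def)
qed

lemma block_mult:
  "block_DR D R *v z = transpose D *v (\<chi> i. z $ Inl i) + transpose R *v (\<chi> l. z $ Inr l)"
proof (rule vec_eq_iff[THEN iffD2], rule allI)
  fix x
  have "(block_DR D R *v z) $ x = (\<Sum>c\<in>UNIV. block_DR D R $ x $ c * z $ c)"
    by (simp only: matrix_vector_mult_def vec_lambda_beta)
  also have "\<dots> = (\<Sum>i\<in>UNIV. D $ i $ x * z $ Inl i) + (\<Sum>l\<in>UNIV. R $ l $ x * z $ Inr l)"
    by (simp add: sum_UNIV_plus block_DR_def)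
  also have "\<dots> = (transpose D *v (\<chi> i. z $ Inl i) + transpose R *v (\<chi> l. z $ Inr l)) $ x"
    by (simp add: matrix_vector_mult_def transpose_def)
  finally show "(block_DR D R *v z) $ x = (transpose D *v (\<chi> i. z $ Inl i) + transpose R *v (\<chi> l. z $ Inr l)) $ x" .
qed

lemma Hmat_mult: "Hmat D R *v f = (\<chi> i. (pinv (block_DR D R) *v f) $ Inl i)"
  by (simp add: vec_eq_iff matrix_vector_mult_def Hmat_def)
lemma key:
  assumes "f = block_DR D R *v z"
  shows "transpose D *v (Hmat D R *v f) + transpose R *v (\<chi> l. (pinv (block_DR D R) *v f) $ Inr l) = f"
proof -
  let ?B = "block_DR D R" and ?P = "pinv (block_DR D R)"
  have "?B *v (?P *v f) = (?B ** ?P ** ?B) *v z" using assms by (simp add: matrix_vector_mul_assoc matrix_mul_assoc)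
  also have "\<dots> = f" using assms by (simp add: pinv_prop)
  finally show ?thesis using block_mult[of D R "?P *v f"] Hmat_mult[of D R f] by simp
qed

lemma block_of:
  "block_DR D R *v (\<chi> c. case c of Inl i \<Rightarrow> s $ i | Inr l \<Rightarrow> y $ l) = transpose D *v s + transpose R *v y"
  by (simp add: block_mult)

theorem proposition6:
  fixes Q :: "real^'s::finite^'node::finite"
    and \<xi>0 :: "real^('node \<times> 'dim::finite)"
    and R :: "real^('node \<times> 'dim)^'q::finite"
    and \<sigma> :: "real^'s"
  assumes "incidence_matrix Q"
    and "\<forall>i. spring_length Q \<xi>0 i \<noteq> 0"
  shows "(\<forall>f. equilibrium (Dphi Q \<xi>0) R \<sigma> f \<longrightarrow>
            transpose (Dphi Q \<xi>0) *v (- \<sigma> + Hmat (Dphi Q \<xi>0) R *v f)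
              \<in> range (\<lambda>y. transpose R *v y))
       \<and> (rank (block_DR (Dphi Q \<xi>0) R) = CARD('node \<times> 'dim) \<longrightarrow>
           (\<forall>f. transpose (Dphi Q \<xi>0) *v (- \<sigma> + Hmat (Dphi Q \<xi>0) R *v f)
                  \<in> range (\<lambda>y. transpose R *v y)
                \<longrightarrow> equilibrium (Dphi Q \<xi>0) R \<sigma> f))"
proof (intro conjI allI impI)
  define D where "D = Dphi Q \<xi>0"
  fix f
  assume eq: "equilibrium (Dphi Q \<xi>0) R \<sigma> f"
  define G where "G = (\<chi> l. (pinv (block_DR D R) *v f) $ Inr l)"
  have "\<forall>d. R *v d = 0 \<longrightarrow> (- (transpose D *v \<sigma>) + f) \<bullet> d = 0"
    using eq unfolding equilibrium_def D_def by blast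
  from perp_range[OF this] obtain y0 where y0: "- (transpose D *v \<sigma>) + f = transpose R *v y0"
    by blast
  have "f = transpose D *v \<sigma> + transpose R *v y0" using y0 by (simp add: algebra_simps)
  hence "f = block_DR D R *v (\<chi> c. case c of Inl i \<Rightarrow> \<sigma> $ i | Inr l \<Rightarrow> y0 $ l)"
    by (simp add: block_of)
  from key[OF this] have k: "transpose D *v (Hmat D R *v f) + transpose R *v G = f"
    unfolding G_def .
  have "transpose D *v (- \<sigma> + Hmat D R *v f) = transpose R *v (y0 - G)"
    using k y0 by (simp add: matrix_vector_right_distrib matrix_vector_mult_diff_distrib algebra_simps)
  thus "transpose (Dphi Q \<xi>0) *v (- \<sigma> + Hmat (Dphi Q \<xi>0) R *v f) \<in> range (\<lambda>y. transpose R *v y)"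
    unfolding D_def by blast
next
  define D where "D = Dphi Q \<xi>0"
  fix f
  assume rk: "rank (block_DR (Dphi Q \<xi>0) R) = CARD('node \<times> 'dim)"
    and r: "transpose (Dphi Q \<xi>0) *v (- \<sigma> + Hmat (Dphi Q \<xi>0) R *v f) \<in> range (\<lambda>y. transpose R *v y)"
  define G where "G = (\<chi> l. (pinv (block_DR D R) *v f) $ Inr l)"
  have "surj ((*v) (block_DR D R))" using rk full_rank_surjective unfolding D_def by blast
  then obtain z where "f = block_DR D R *v z" by (metis surjD)
  from key[OF this] have k: "transpose D *v (Hmat D R *v f) + transpose R *v G = f"
    unfolding G_def .
  from r obtain y where y: "transpose D *v (- \<sigma> + Hmat D R *v f) = transpose R *v y"
    unfolding D_def by blast
  have w: "- (transpose D *v \<sigma>) + f = transpose R *v (y + G)"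
    using k y by (simp add: matrix_vector_right_distrib matrix_vector_mult_diff_distrib algebra_simps)
  show "equilibrium (Dphi Q \<xi>0) R \<sigma> f"
    unfolding equilibrium_def D_def[symmetric]
  proof (intro allI impI)
    fix d assume "R *v d = 0"
    thus "(- (transpose D *v \<sigma>) + f) \<bullet> d = 0" unfolding w by (metis tr_dot inner_zero_right)
  qed
qed

end
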